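(* Let $q$ be a prime power and $m>1$ an integer. Let $L_1(x)\in\mathbf{F}_{q^m}[x]$ be a linearized polynomial that is a permutation polynomial of $\mathbf{F}_{q^m}$, and let $L_2(x)\in\mathbf{F}_{q^m}[x]$ be a linearized polynomial. Let $b\in\mathbf{F}_q$, $\gamma\in\mathbf{F}_{q^m}$, let $h:\mathbf{F}_q\to\mathbf{F}_q$ be a map, and let $f:\mathbf{F}_{q^m}\to\mathbf{F}_q$ be a surjective map. Suppose $L_1^{-1}(L_2(\gamma))$ is a $b$-linear translator of $f$, where $L_1^{-1}$ denotes the inverse of the bijection $x\mapsto L_1(x)$ of $\mathbf{F}_{q^m}$. Then $L_1(x)+L_2(\gamma)h(f(x))$ is a permutation polynomial of $\mathbf{F}_{q^m}$ if and only if either $L_2(\gamma)=0$ or $x+b\,h(x)$ is a permutation polynomial of $\mathbf{F}_q$.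
   Context: A linearized polynomial over $\mathbf{F}_{q^m}$ is a polynomial of the form $\sum_{i=0}^{m-1}a_i x^{q^i}$ with $a_i\in\mathbf{F}_{q^m}$. Linear translator: let $f:\mathbf{F}_{q^m}\to\mathbf{F}_q$, $a\in\mathbf{F}_q$ and $\alpha$ a nonzero element of $\mathbf{F}_{q^m}$; $\alpha$ is an $a$-linear translator of $f$ if $f(x+u\alpha)-f(x)=ua$ for all $x\in\mathbf{F}_{q^m}$ and all $u\in\mathbf{F}_q$. A permutation polynomial (or map) of a finite field $K$ is one inducing a bijection $K\to K$. *)

theory Defs
  imports "HOL-Computational_Algebra.Primes"
begin

text \<open>The ambient field of type 'a plays the role of F_{q^m} (CARD('a) = q^m);
  its subfield F_q is the set of fixed points of the q-Frobenius.\<close>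

definition Fq :: "nat \<Rightarrow> 'a::field set" where
  "Fq q = {x. x ^ q = x}"

definition prime_power :: "nat \<Rightarrow> bool" where
  "prime_power q \<longleftrightarrow> (\<exists>p k. prime p \<and> k > 0 \<and> q = p ^ k)"

definition linearized :: "nat \<Rightarrow> nat \<Rightarrow> ('a::field \<Rightarrow> 'a) \<Rightarrow> bool" where
  "linearized q m L \<longleftrightarrow> (\<exists>a::nat \<Rightarrow> 'a. \<forall>x. L x = (\<Sum>i<m. a i * x ^ (q ^ i)))"

definition linear_translator :: "nat \<Rightarrow> ('a::field \<Rightarrow> 'a) \<Rightarrow> 'a \<Rightarrow> 'a \<Rightarrow> bool" where
  "linear_translator q f a \<alpha> \<longleftrightarrow>
     \<alpha> \<noteq> 0 \<and> (\<forall>x. \<forall>u \<in> Fq q. f (x + u * \<alpha>) - f x = u * a)"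

end

theory Submission
  imports Defs "HOL-Number_Theory.Residues"
begin

unbundle no m_inv_syntax

lemma char_eq:
  assumes "prime_power q" "m > 0" "card (UNIV :: 'a::{finite,field} set) = q ^ m"
  shows "\<exists>k. q = CHAR('a) ^ k \<and> prime CHAR('a)"
proof -
  obtain p k where pk: "prime p" "k > 0" "q = p ^ k" using assms(1) unfolding prime_power_def by blast
  have cp: "prime CHAR('a)"
    by (rule prime_CHAR_semidom) (simp add: finite_imp_CHAR_pos)
  have "CHAR('a) dvd p ^ (k * m)" using CHAR_dvd_CARD[where 'a='a] assms(3) pk
    by (simp add: power_mult)
  hence "CHAR('a) dvd p" using cp prime_dvd_power by blast
  hence "CHAR('a) = p" using cp pk(1) primes_dvd_imp_eq by blast
  thus ?thesis using pk cp by blast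
qed

lemma frob_add:
  assumes "q = CHAR('a::{finite,field}) ^ k" "prime CHAR('a)"
  shows "((x::'a) + y) ^ (q ^ i) = x ^ (q^i) + y ^ (q^i)"
  using assms by (intro freshmans_dream') (auto simp: power_mult[symmetric])

lemma frob_diff:
  assumes "q = CHAR('a::{finite,field}) ^ k" "prime CHAR('a)"
  shows "((x::'a) - y) ^ q = x ^ q - y ^ q"
proof -
  have "((x - y) + y) ^ (q^1) = (x-y) ^ (q^1) + y ^ (q^1)" by (rule frob_add[OF assms])
  thus ?thesis by (simp add: algebra_simps)
qed

lemma Fq_pow:
  assumes "c \<in> Fq q" shows "(c::'a::field) ^ (q ^ i) = c"
proof (induction i)
  case (Suc i)
  have "c ^ (q ^ Suc i) = (c ^ (q ^ i)) ^ q" by (simp add: power_mult[symmetric] mult.commute)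
  thus ?case using Suc assms by (simp add: Fq_def)
qed simp

lemma lin_L:
  assumes "linearized q m L" "q = CHAR('a::{finite,field}) ^ k" "prime CHAR('a)" "c \<in> Fq q"
  shows "L (x + c * y) = L x + c * (L (y::'a))"
proof -
  obtain a where a: "\<And>x. L x = (\<Sum>i<m. a i * x ^ (q ^ i))" using assms(1) unfolding linearized_def by blast
  have "L (x + c*y) = (\<Sum>i<m. a i * x ^ (q ^ i) + c * (a i * y ^ (q^i)))"
    unfolding a by (intro sum.cong refl)
      (simp add: frob_add[OF assms(2,3)] power_mult_distrib Fq_pow[OF assms(4)] algebra_simps)
  thus ?thesis unfolding a by (simp add: sum.distrib sum_distrib_left)
qed

theorem theorem4p1:
  fixes q m :: nat
    and L1 L2 f h :: "'a::{finite,field} \<Rightarrow> 'a"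
    and b \<gamma> :: 'a
  assumes "prime_power q" and "m > 1" and "card (UNIV :: 'a set) = q ^ m"
    and "linearized q m L1" and "bij L1"
    and "linearized q m L2"
    and "b \<in> Fq q"
    and "h ` Fq q \<subseteq> Fq q"
    and "f ` UNIV = Fq q"
    and "linear_translator q f b (inv L1 (L2 \<gamma>))"
  shows "bij (\<lambda>x. L1 x + L2 \<gamma> * h (f x)) \<longleftrightarrow>
           (L2 \<gamma> = 0 \<or> bij_betw (\<lambda>x. x + b * h x) (Fq q) (Fq q))"
proof -
  obtain k where k: "q = CHAR('a) ^ k" and cp: "prime CHAR('a)"
    using char_eq[OF assms(1) _ assms(3)] assms(2) by auto
  define al where "al = inv L1 (L2 \<gamma>)"
  have L1a: "L1 al = L2 \<gamma>" unfolding al_def using assms(5) by (meson bij_inv_eq_iff)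
  have a0: "al \<noteq> 0" and tr: "\<And>x u. u \<in> Fq q \<Longrightarrow> f (x + u * al) - f x = u * b"
    using assms(10) unfolding linear_translator_def al_def by auto
  have L10: "L1 0 = 0"
  proof -
    obtain a where a: "\<And>x. L1 x = (\<Sum>i<m. a i * x ^ (q ^ i))" using assms(4) unfolding linearized_def by blast
    have "q > 0" using k cp prime_gt_0_nat by simp
    thus ?thesis unfolding a by (simp add: zero_power)
  qed
  have L2n0: "L2 \<gamma> \<noteq> 0"
  proof
    assume "L2 \<gamma> = 0"
    hence "L1 al = L1 0" using L1a L10 by simp
    hence "al = 0" using assms(5) by (simp add: bij_def inj_eq)
    thus False using a0 by simp
  qed
  have fF: "f x \<in> Fq q" for x using assms(9) by blast
  have hF: "u \<in> Fq q \<Longrightarrow> h u \<in> Fq q" for u using assms(8) by blast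
  have subF: "u \<in> Fq q \<Longrightarrow> v \<in> Fq q \<Longrightarrow> u - v \<in> Fq q" for u v :: 'a
    using frob_diff[OF k cp, of u v] by (simp add: Fq_def)
  have addF: "u \<in> Fq q \<Longrightarrow> v \<in> Fq q \<Longrightarrow> u + v \<in> Fq q" for u v :: 'a
    using frob_add[OF k cp, of u v 1] by (simp add: Fq_def)
  have mulF: "u \<in> Fq q \<Longrightarrow> v \<in> Fq q \<Longrightarrow> u * v \<in> Fq q" for u v :: 'a
    by (simp add: Fq_def power_mult_distrib)
  define G where "G x = x + h (f x) * al" for x
  have FG: "(\<lambda>x. L1 x + L2 \<gamma> * h (f x)) = L1 \<circ> G"
  proof
    fix x
    have "L1 (x + h (f x) * al) = L1 x + h (f x) * L1 al" by (rule lin_L[OF assms(4) k cp hF[OF fF]])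
    thus "L1 x + L2 \<gamma> * h (f x) = (L1 \<circ> G) x" unfolding G_def L1a by (simp add: mult.commute)
  qed
  have "bij (L1 \<circ> G) \<longleftrightarrow> bij G"
  proof
    assume "bij (L1 \<circ> G)"
    hence "inj (L1 \<circ> G)" by (simp add: bij_def)
    hence iG: "inj G" by (rule inj_on_imageI2)
    show "bij G" unfolding bij_def using iG finite_UNIV_inj_surj[OF finite_UNIV iG] by simp
  next
    assume "bij G" thus "bij (L1 \<circ> G)" using assms(5) by (rule bij_comp)
  qed
  hence e1: "bij (\<lambda>x. L1 x + L2 \<gamma> * h (f x)) \<longleftrightarrow> bij G" using FG by simp
  define phi where "phi u = u + b * h u" for u
  have phiF: "phi ` Fq q \<subseteq> Fq q" unfolding phi_def using addF mulF hF assms(7) by auto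
  have finF: "finite (Fq q :: 'a set)" by simp
  have "bij G \<longleftrightarrow> inj_on phi (Fq q)"
  proof
    assume bG: "bij G"
    show "inj_on phi (Fq q)"
    proof (rule inj_onI, rule ccontr)
      fix u v assume u: "u \<in> Fq q" and v: "v \<in> Fq q" and e: "phi u = phi v" and ne: "u \<noteq> v"
      obtain x where x: "f x = u" using assms(9) u by (metis imageE)
      define w where "w = h u - h v"
      have wF: "w \<in> Fq q" unfolding w_def using subF hF u v by auto
      have "w * b - (v - u) = phi u - phi v" by (simp add: phi_def w_def algebra_simps)
      with e have bw: "w * b = v - u" by simp
      define y where "y = x + w * al"
      have "f y - f x = w * b" unfolding y_def by (rule tr[OF wF])
      hence fy: "f y = v" using bw x by (simp add: eq_diff_eq)
      have "G y = y + h v * al" unfolding G_def by (simp only: fy)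
      also have "\<dots> = x + h u * al" unfolding y_def w_def by (simp add: algebra_simps)
      also have "\<dots> = G x" unfolding G_def by (simp only: x)
      finally have "G y = G x" .
      hence "y = x" using bG by (simp add: bij_def inj_eq)
      hence "w = 0" using a0 unfolding y_def by simp
      hence "u = v" using bw by simp
      thus False using ne by simp
    qed
  next
    assume iphi: "inj_on phi (Fq q)"
    have "inj G"
    proof (rule injI)
      fix x y assume e: "G x = G y"
      define u where "u = h (f y) - h (f x)"
      have uF: "u \<in> Fq q" unfolding u_def using subF hF fF by auto
      have "x - (y + u * al) = G x - G y" by (simp add: G_def u_def algebra_simps)
      with e have xy: "x = y + u * al" by simp
      have "f (y + u * al) - f y = u * b" by (rule tr[OF uF])
      hence fx: "f x = f y + u * b" unfolding xy[symmetric] by (simp add: algebra_simps)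
      have "phi (f x) = f y + u * b + b * h (f x)" unfolding phi_def by (simp only: fx)
      also have "\<dots> = phi (f y)" unfolding phi_def u_def by (simp add: algebra_simps)
      finally have "phi (f x) = phi (f y)" .
      hence "f x = f y" using iphi fF by (meson inj_onD)
      hence "u = 0" unfolding u_def by simp
      thus "x = y" using xy by simp
    qed
    thus "bij G" unfolding bij_def using finite_UNIV_inj_surj[OF finite_UNIV] by simp
  qed
  also have "\<dots> \<longleftrightarrow> bij_betw phi (Fq q) (Fq q)"
  proof
    assume i: "inj_on phi (Fq q)"
    have "card (phi ` Fq q) = card (Fq q :: 'a set)" using card_image[OF i] by simp
    hence "phi ` Fq q = Fq q" using phiF finF by (simp add: card_subset_eq)
    thus "bij_betw phi (Fq q) (Fq q)" using i by (simp add: bij_betw_def)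
  qed (simp add: bij_betw_def)
  finally show ?thesis using e1 L2n0 unfolding phi_def by simp
qed

end
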